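(* Let $c_1$ be a real constant and $f$ a smooth function of $\theta$ on an interval satisfying $$\sin\theta\Big[\big(3f'+c_1\big)f''-2ff'\Big]+\cos\theta\Big[ff''+4(f')^2+2c_1f'\Big]=0$$ (primes denote $d/d\theta$). In polar coordinates $x=r\cos\theta$, $y=r\sin\theta$ ($r>0$, $\theta$ in that interval), let $V=f'(\theta)/r^2$. Then $$J=p_\theta^2\Big(\cos\theta\,p_r-\sin\theta\,\frac{p_\theta}{r}\Big)+\Big[(2f'+c_1)\cos\theta-f\sin\theta\Big]p_r-\Big[(3f'+c_1)\sin\theta+f\cos\theta\Big]\frac{p_\theta}{r}$$ is a first integral of $\ddot x=-V_{,x}$, $\ddot y=-V_{,y}$, where $p_r=\dot r$ and $p_\theta=r^2\dot\theta$.
   Context: A first integral is a function of $(t,x,y,\dot x,\dot y)$ whose total time derivative vanishes along every solution of the given equations of motion. *)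

theory Defs
  imports "HOL-Analysis.Analysis"
begin

definition smooth_on_real :: "(real \<Rightarrow> real) \<Rightarrow> real set \<Rightarrow> bool" where
  "smooth_on_real f S \<longleftrightarrow> (\<forall>n. \<forall>x\<in>S. ((deriv ^^ n) f) differentiable (at x))"

definition J_polar :: "(real \<Rightarrow> real) \<Rightarrow> real \<Rightarrow> real \<Rightarrow> real \<Rightarrow> real \<Rightarrow> real \<Rightarrow> real" where
  "J_polar f c1 r \<theta> pr p\<theta> =
     p\<theta>^2 * (cos \<theta> * pr - sin \<theta> * p\<theta> / r)
     + ((2 * deriv f \<theta> + c1) * cos \<theta> - f \<theta> * sin \<theta>) * pr
     - ((3 * deriv f \<theta> + c1) * sin \<theta> + f \<theta> * cos \<theta>) * p\<theta> / r"

end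

theory Submission
  imports Defs
begin

lemma polar_local:
  fixes V :: "real \<Rightarrow> real \<Rightarrow> real" and g :: "real \<Rightarrow> real"
  assumes V_def: "\<forall>\<rho>>0. \<forall>\<phi>\<in>I. V (\<rho> * cos \<phi>) (\<rho> * sin \<phi>) = g \<phi> / \<rho>^2"
    and apos: "u * cos t0 + v * sin t0 > 0"
    and inI: "t0 + arctan ((- u * sin t0 + v * cos t0) / (u * cos t0 + v * sin t0)) \<in> I"
  shows "V u v = g (t0 + arctan ((- u * sin t0 + v * cos t0) / (u * cos t0 + v * sin t0))) / (u^2 + v^2)"
proof -
  define C where "C = cos t0"
  define S where "S = sin t0"
  have CS: "C^2 + S^2 = 1" unfolding C_def S_def by simp
  define a where "a = u * C + v * S"
  define b where "b = - u * S + v * C"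
  have a0: "a > 0" using apos unfolding a_def C_def S_def by simp
  have ab: "a^2 + b^2 = u^2 + v^2"
  proof -
    have "a^2 + b^2 = (u^2 + v^2) * (C^2 + S^2)" unfolding a_def b_def by algebra
    thus ?thesis using CS by simp
  qed
  define \<rho> where "\<rho> = sqrt (u^2 + v^2)"
  have rho2: "\<rho>^2 = u^2 + v^2" unfolding \<rho>_def by simp
  have rpos: "\<rho> > 0" unfolding \<rho>_def using ab a0
    by (metis add_pos_nonneg real_sqrt_gt_zero zero_less_power2 zero_le_power2 less_irrefl)
  have sq: "sqrt (1 + (b/a)^2) = \<rho> / a"
  proof (rule real_sqrt_unique)
    show "(\<rho> / a)^2 = 1 + (b/a)^2" using rho2 ab a0 by (simp add: field_simps power_divide)
    show "0 \<le> \<rho> / a" using rpos a0 by simp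
  qed
  define \<alpha> where "\<alpha> = arctan (b / a)"
  have ca: "cos \<alpha> = a / \<rho>" unfolding \<alpha>_def cos_arctan sq using a0 rpos by simp
  have sa: "sin \<alpha> = b / \<rho>" unfolding \<alpha>_def sin_arctan sq using a0 rpos by simp
  have eu: "\<rho> * cos (t0 + \<alpha>) = u"
  proof -
    have "\<rho> * cos (t0 + \<alpha>) = C * a - S * b" unfolding cos_add ca sa C_def[symmetric] S_def[symmetric]
      using rpos by (simp add: field_simps)
    also have "\<dots> = u * (C^2 + S^2)" unfolding a_def b_def by algebra
    finally show ?thesis using CS by simp
  qed
  have ev: "\<rho> * sin (t0 + \<alpha>) = v"
  proof -
    have "\<rho> * sin (t0 + \<alpha>) = S * a + C * b" unfolding sin_add ca sa C_def[symmetric] S_def[symmetric]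
      using rpos by (simp add: field_simps)
    also have "\<dots> = v * (C^2 + S^2)" unfolding a_def b_def by algebra
    finally show ?thesis using CS by simp
  qed
  have inI': "t0 + \<alpha> \<in> I" using inI unfolding \<alpha>_def a_def b_def C_def S_def by simp
  have "V u v = V (\<rho> * cos (t0 + \<alpha>)) (\<rho> * sin (t0 + \<alpha>))" using eu ev by simp
  also have "\<dots> = g (t0 + \<alpha>) / \<rho>^2" using V_def rpos inI' by blast
  finally show ?thesis unfolding rho2 \<alpha>_def a_def b_def C_def S_def by simp
qed


lemma ev_cont:
  fixes h :: "real \<Rightarrow> real"
  assumes "isCont h u0" "open S" "h u0 \<in> S"
  shows "eventually (\<lambda>u. h u \<in> S) (nhds u0)"
  using assms topological_tendstoD tendsto_at_iff_tendsto_nhds isCont_def by metis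

lemma partial_u:
  fixes V :: "real \<Rightarrow> real \<Rightarrow> real" and g :: "real \<Rightarrow> real"
  assumes V_def: "\<forall>\<rho>>0. \<forall>\<phi>\<in>I. V (\<rho> * cos \<phi>) (\<rho> * sin \<phi>) = g \<phi> / \<rho>^2"
    and oI: "open I" and t0I: "t0 \<in> I" and r0: "\<rho>0 > 0" and gd: "DERIV g t0 :> g2"
  shows "DERIV (\<lambda>u. V u (\<rho>0 * sin t0)) (\<rho>0 * cos t0) :> - (g2 * sin t0 + 2 * g t0 * cos t0) / \<rho>0^3"
proof -
  define C where "C = cos t0"
  define S where "S = sin t0"
  have CS: "C^2 + S^2 = 1" unfolding C_def S_def by simp
  define v0 where "v0 = \<rho>0 * S"
  define u0 where "u0 = \<rho>0 * C"
  define A where "A = (\<lambda>u. u * C + v0 * S)"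
  define B where "B = (\<lambda>u. - u * S + v0 * C)"
  define h where "h = (\<lambda>u. t0 + arctan (B u / A u))"
  have A0: "A u0 = \<rho>0" unfolding A_def u0_def v0_def
    using CS by (metis mult.commute mult.right_neutral power2_eq_square distrib_left mult.assoc)
  have B0: "B u0 = 0" unfolding B_def u0_def v0_def by simp
  have h0: "h u0 = t0" unfolding h_def B0 by simp
  have qd: "DERIV (\<lambda>u. B u / A u) u0 :> - S / \<rho>0"
  proof -
    have "DERIV (\<lambda>u. B u / A u) u0 :> ((- S) * A u0 - B u0 * C) / (A u0 * A u0)"
      unfolding A_def B_def using r0 A0[unfolded A_def]
      by (auto intro!: derivative_eq_intros)
    thus ?thesis using A0 B0 r0 by simp
  qed
  have hd: "DERIV h u0 :> - S / \<rho>0"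
  proof -
    have "DERIV h u0 :> 0 + inverse (1 + (B u0 / A u0)^2) * (- S / \<rho>0)"
      unfolding h_def by (rule derivative_eq_intros qd refl)+
    thus ?thesis using B0 by simp
  qed
  have ev1: "eventually (\<lambda>u. A u \<in> {0<..}) (nhds u0)"
    by (rule ev_cont) (auto simp: A_def A0[unfolded A_def] r0)
  have ev2: "eventually (\<lambda>u. h u \<in> I) (nhds u0)"
    by (rule ev_cont) (use hd DERIV_isCont oI t0I h0 in auto)
  have evq: "eventually (\<lambda>u. V u v0 = g (h u) / (u^2 + v0^2)) (nhds u0)"
    using ev1 ev2
  proof eventually_elim
    case (elim u)
    show ?case using polar_local[OF V_def, of u t0 v0] elim
      unfolding h_def A_def B_def C_def S_def by simp
  qed
  have gh: "DERIV (\<lambda>u. g (h u)) u0 :> g2 * (- S / \<rho>0)"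
    using DERIV_chain2[OF gd[folded h0] hd] by simp
  have uv: "u0^2 + v0^2 = \<rho>0^2" unfolding u0_def v0_def using CS
    by (metis distrib_left mult.right_neutral power_mult_distrib)
  have dd: "DERIV (\<lambda>u. u^2 + v0^2) u0 :> 2 * u0"
    by (auto intro!: derivative_eq_intros)
  have "DERIV (\<lambda>u. g (h u) / (u^2 + v0^2)) u0 :>
         ((g2 * (- S / \<rho>0)) * (u0^2 + v0^2) - g (h u0) * (2 * u0)) / ((u0^2 + v0^2) * (u0^2 + v0^2))"
    by (rule DERIV_divide[OF gh dd]) (use uv r0 in simp)
  moreover have "((g2 * (- S / \<rho>0)) * (u0^2 + v0^2) - g (h u0) * (2 * u0)) / ((u0^2 + v0^2) * (u0^2 + v0^2))
     = - (g2 * S + 2 * g t0 * C) / \<rho>0^3"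
    unfolding uv h0 using r0 by (simp add: u0_def field_simps power2_eq_square power3_eq_cube)
  ultimately have "DERIV (\<lambda>u. g (h u) / (u^2 + v0^2)) u0 :> - (g2 * S + 2 * g t0 * C) / \<rho>0^3"
    by simp
  thus ?thesis
    using DERIV_cong_ev[OF refl evq refl] unfolding u0_def v0_def C_def S_def by simp
qed

lemma partial_v:
  fixes V :: "real \<Rightarrow> real \<Rightarrow> real" and g :: "real \<Rightarrow> real"
  assumes V_def: "\<forall>\<rho>>0. \<forall>\<phi>\<in>I. V (\<rho> * cos \<phi>) (\<rho> * sin \<phi>) = g \<phi> / \<rho>^2"
    and oI: "open I" and t0I: "t0 \<in> I" and r0: "\<rho>0 > 0" and gd: "DERIV g t0 :> g2"
  shows "DERIV (\<lambda>v. V (\<rho>0 * cos t0) v) (\<rho>0 * sin t0) :> (g2 * cos t0 - 2 * g t0 * sin t0) / \<rho>0^3"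
proof -
  define C where "C = cos t0"
  define S where "S = sin t0"
  have CS: "C^2 + S^2 = 1" unfolding C_def S_def by simp
  define v0 where "v0 = \<rho>0 * S"
  define u0 where "u0 = \<rho>0 * C"
  define A where "A = (\<lambda>v. u0 * C + v * S)"
  define B where "B = (\<lambda>v. - u0 * S + v * C)"
  define h where "h = (\<lambda>u. t0 + arctan (B u / A u))"
  have A0: "A v0 = \<rho>0" unfolding A_def u0_def v0_def
    using CS by (metis mult.commute mult.right_neutral power2_eq_square distrib_left mult.assoc)
  have B0: "B v0 = 0" unfolding B_def u0_def v0_def by simp
  have h0: "h v0 = t0" unfolding h_def B0 by simp
  have qd: "DERIV (\<lambda>u. B u / A u) v0 :> C / \<rho>0"
  proof -
    have "DERIV (\<lambda>u. B u / A u) v0 :> (C * A v0 - B v0 * S) / (A v0 * A v0)"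
      unfolding A_def B_def using r0 A0[unfolded A_def]
      by (auto intro!: derivative_eq_intros)
    thus ?thesis using A0 B0 r0 by simp
  qed
  have hd: "DERIV h v0 :> C / \<rho>0"
  proof -
    have "DERIV h v0 :> 0 + inverse (1 + (B v0 / A v0)^2) * (C / \<rho>0)"
      unfolding h_def by (rule derivative_eq_intros qd refl)+
    thus ?thesis using B0 by simp
  qed
  have ev1: "eventually (\<lambda>u. A u \<in> {0<..}) (nhds v0)"
    by (rule ev_cont) (auto simp: A_def A0[unfolded A_def] r0)
  have ev2: "eventually (\<lambda>u. h u \<in> I) (nhds v0)"
    by (rule ev_cont) (use hd DERIV_isCont oI t0I h0 in auto)
  have evq: "eventually (\<lambda>u. V u0 u = g (h u) / (u0^2 + u^2)) (nhds v0)"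
    using ev1 ev2
  proof eventually_elim
    case (elim u)
    show ?case using polar_local[OF V_def, of u0 t0 u] elim
      unfolding h_def A_def B_def C_def S_def by simp
  qed
  have gh: "DERIV (\<lambda>u. g (h u)) v0 :> g2 * (C / \<rho>0)"
    using DERIV_chain2[OF gd[folded h0] hd] by simp
  have uv: "u0^2 + v0^2 = \<rho>0^2" unfolding u0_def v0_def using CS
    by (metis distrib_left mult.right_neutral power_mult_distrib)
  have dd: "DERIV (\<lambda>u. u0^2 + u^2) v0 :> 2 * v0"
    by (auto intro!: derivative_eq_intros)
  have "DERIV (\<lambda>u. g (h u) / (u0^2 + u^2)) v0 :>
         ((g2 * (C / \<rho>0)) * (u0^2 + v0^2) - g (h v0) * (2 * v0)) / ((u0^2 + v0^2) * (u0^2 + v0^2))"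
    by (rule DERIV_divide[OF gh dd]) (use uv r0 in simp)
  moreover have "((g2 * (C / \<rho>0)) * (u0^2 + v0^2) - g (h v0) * (2 * v0)) / ((u0^2 + v0^2) * (u0^2 + v0^2))
     = (g2 * C - 2 * g t0 * S) / \<rho>0^3"
    unfolding uv h0 using r0 by (simp add: v0_def field_simps power2_eq_square power3_eq_cube)
  ultimately have "DERIV (\<lambda>u. g (h u) / (u0^2 + u^2)) v0 :> (g2 * C - 2 * g t0 * S) / \<rho>0^3"
    by simp
  thus ?thesis
    using DERIV_cong_ev[OF refl evq refl] unfolding u0_def v0_def C_def S_def by simp
qed

theorem mainTheorem14:
  fixes c1 :: real and f :: "real \<Rightarrow> real" and I :: "real set"
    and V :: "real \<Rightarrow> real \<Rightarrow> real"
    and T :: "real set"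
    and x y xd yd xdd ydd r \<theta> rd \<theta>d :: "real \<Rightarrow> real"
  assumes I_interval: "is_interval I" and I_open: "open I"
    and f_smooth: "smooth_on_real f I"
    and f_ode: "\<forall>\<theta>\<in>I.
        sin \<theta> * ((3 * deriv f \<theta> + c1) * deriv (deriv f) \<theta> - 2 * f \<theta> * deriv f \<theta>)
      + cos \<theta> * (f \<theta> * deriv (deriv f) \<theta> + 4 * (deriv f \<theta>)^2 + 2 * c1 * deriv f \<theta>) = 0"
    and V_def: "\<forall>\<rho>>0. \<forall>\<phi>\<in>I. V (\<rho> * cos \<phi>) (\<rho> * sin \<phi>) = deriv f \<phi> / \<rho>^2"
    and T_open: "open T"
    and x_deriv: "\<forall>t\<in>T. (x has_real_derivative xd t) (at t)"
    and y_deriv: "\<forall>t\<in>T. (y has_real_derivative yd t) (at t)"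
    and xd_deriv: "\<forall>t\<in>T. (xd has_real_derivative xdd t) (at t)"
    and yd_deriv: "\<forall>t\<in>T. (yd has_real_derivative ydd t) (at t)"
    and eq_x: "\<forall>t\<in>T. xdd t = - deriv (\<lambda>u. V u (y t)) (x t)"
    and eq_y: "\<forall>t\<in>T. ydd t = - deriv (\<lambda>v. V (x t) v) (y t)"
    and r_deriv: "\<forall>t\<in>T. (r has_real_derivative rd t) (at t)"
    and \<theta>_deriv: "\<forall>t\<in>T. (\<theta> has_real_derivative \<theta>d t) (at t)"
    and r_pos: "\<forall>t\<in>T. r t > 0"
    and \<theta>_in: "\<forall>t\<in>T. \<theta> t \<in> I"
    and polar: "\<forall>t\<in>T. x t = r t * cos (\<theta> t) \<and> y t = r t * sin (\<theta> t)"
  shows "\<forall>t\<in>T. ((\<lambda>s. J_polar f c1 (r s) (\<theta> s) (rd s) ((r s)^2 * \<theta>d s))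
                 has_real_derivative 0) (at t)"
  proof
  fix t assume tT: "t \<in> T"
  have evT: "\<And>s. s \<in> T \<Longrightarrow> eventually (\<lambda>u. u \<in> T) (nhds s)"
    using T_open eventually_nhds_in_open by blast
  have xd_eq: "xd s = rd s * cos (\<theta> s) - r s * sin (\<theta> s) * \<theta>d s" if sT: "s \<in> T" for s
  proof -
    have "DERIV (\<lambda>u. r u * cos (\<theta> u)) s :> rd s * cos (\<theta> s) + r s * (- sin (\<theta> s) * \<theta>d s)"
      using r_deriv \<theta>_deriv sT by (auto intro!: derivative_eq_intros)
    moreover have "DERIV (\<lambda>u. r u * cos (\<theta> u)) s :> xd s"
    proof -
      have ev: "eventually (\<lambda>u. x u = r u * cos (\<theta> u)) (nhds s)"
        using eventually_mono[OF evT[OF sT]] polar by auto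
      thus ?thesis using DERIV_cong_ev[OF refl ev refl] x_deriv sT by blast
    qed
    ultimately have "rd s * cos (\<theta> s) + r s * (- sin (\<theta> s) * \<theta>d s) = xd s" by (rule DERIV_unique)
    thus ?thesis by simp
  qed
  have yd_eq: "yd s = rd s * sin (\<theta> s) + r s * cos (\<theta> s) * \<theta>d s" if sT: "s \<in> T" for s
  proof -
    have "DERIV (\<lambda>u. r u * sin (\<theta> u)) s :> rd s * sin (\<theta> s) + r s * (cos (\<theta> s) * \<theta>d s)"
      using r_deriv \<theta>_deriv sT by (auto intro!: derivative_eq_intros)
    moreover have "DERIV (\<lambda>u. r u * sin (\<theta> u)) s :> yd s"
    proof -
      have ev: "eventually (\<lambda>u. y u = r u * sin (\<theta> u)) (nhds s)"
        using eventually_mono[OF evT[OF sT]] polar by auto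
      thus ?thesis using DERIV_cong_ev[OF refl ev refl] y_deriv sT by blast
    qed
    ultimately have "rd s * sin (\<theta> s) + r s * (cos (\<theta> s) * \<theta>d s) = yd s" by (rule DERIV_unique)
    thus ?thesis by simp
  qed
  have fdiff: "DERIV f u :> deriv f u" if "u \<in> I" for u
    using f_smooth that unfolding smooth_on_real_def
    by (metis DERIV_deriv_iff_real_differentiable funpow_0)
  have f1diff: "DERIV (deriv f) u :> deriv (deriv f) u" if "u \<in> I" for u
  proof -
    have "((deriv ^^ 1) f) differentiable (at u)" using f_smooth that unfolding smooth_on_real_def by blast
    thus ?thesis by (simp add: DERIV_deriv_iff_real_differentiable)
  qed
  define P where "P = (\<lambda>s. xd s * cos (\<theta> s) + yd s * sin (\<theta> s))"
  define Q where "Q = (\<lambda>s. r s * (- xd s * sin (\<theta> s) + yd s * cos (\<theta> s)))"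
  have PQ: "P s = rd s \<and> Q s = (r s)^2 * \<theta>d s" if sT: "s \<in> T" for s
  proof -
    have cs: "(sin (\<theta> s))^2 + (cos (\<theta> s))^2 = 1" by simp
    have "P s = rd s * ((sin (\<theta> s))^2 + (cos (\<theta> s))^2)"
      unfolding P_def xd_eq[OF sT] yd_eq[OF sT] by algebra
    moreover have "Q s = (r s)^2 * \<theta>d s * ((sin (\<theta> s))^2 + (cos (\<theta> s))^2)"
      unfolding Q_def xd_eq[OF sT] yd_eq[OF sT] by algebra
    ultimately show ?thesis using cs by simp
  qed
  define R where "R = r t"
  define Th where "Th = \<theta> t"
  define C where "C = cos Th"
  define S where "S = sin Th"
  define F0 where "F0 = f Th"
  define F1 where "F1 = deriv f Th"
  define F2 where "F2 = deriv (deriv f) Th"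
  define W where "W = \<theta>d t"
  define p where "p = rd t"
  have CS: "S^2 + C^2 = 1" unfolding S_def C_def by simp
  have R0: "R > 0" using r_pos tT R_def by simp
  have ThI: "Th \<in> I" using \<theta>_in tT Th_def by simp
  have Vx: "deriv (\<lambda>u. V u (y t)) (x t) = - (F2 * S + 2 * F1 * C) / R^3"
    using DERIV_imp_deriv[OF partial_u[OF V_def I_open ThI R0 f1diff[OF ThI]]] polar tT
    unfolding R_def Th_def F1_def F2_def S_def C_def by simp
  have Vy: "deriv (\<lambda>v. V (x t) v) (y t) = (F2 * C - 2 * F1 * S) / R^3"
    using DERIV_imp_deriv[OF partial_v[OF V_def I_open ThI R0 f1diff[OF ThI]]] polar tT
    unfolding R_def Th_def F1_def F2_def S_def C_def by simp
  have xdt: "xd t = p * C - R * S * W" using xd_eq[OF tT] unfolding p_def C_def S_def R_def W_def Th_def .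
  have ydt: "yd t = p * S + R * C * W" using yd_eq[OF tT] unfolding p_def C_def S_def R_def W_def Th_def .
  have xddt: "xdd t = (F2 * S + 2 * F1 * C) / R^3" using eq_x tT Vx R0 by (simp add: field_simps)
  have yddt: "ydd t = - (F2 * C - 2 * F1 * S) / R^3" using eq_y tT Vy R0 by (simp add: field_simps)
  have Pd0: "DERIV P t :> xdd t * C + xd t * (- S * W) + (ydd t * S + yd t * (C * W))"
    unfolding P_def C_def S_def Th_def W_def using xd_deriv yd_deriv \<theta>_deriv tT
    by (auto intro!: derivative_eq_intros)
  have Pd: "DERIV P t :> R * W^2 + 2 * F1 / R^3"
  proof -
    have "xdd t * C + xd t * (- S * W) + (ydd t * S + yd t * (C * W))
       = (R * W^2 + 2 * F1 / R^3) * (S^2 + C^2)"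
      unfolding xdt ydt xddt yddt using R0 by (simp add: field_simps power2_eq_square power3_eq_cube)
    thus ?thesis using Pd0 CS by simp
  qed
  have Qd0: "DERIV Q t :> p * (- xd t * S + yd t * C) + R * (- xdd t * S - xd t * (C * W) + (ydd t * C - yd t * (S * W)))"
    unfolding Q_def C_def S_def Th_def W_def p_def R_def using xd_deriv yd_deriv \<theta>_deriv r_deriv tT
    by (auto intro!: derivative_eq_intros simp: algebra_simps)
  have Qd: "DERIV Q t :> - F2 / R^2"
  proof -
    have "p * (- xd t * S + yd t * C) + R * (- xdd t * S - xd t * (C * W) + (ydd t * C - yd t * (S * W)))
       = (- F2 / R^2) * (S^2 + C^2)"
      unfolding xdt ydt xddt yddt using R0 by (simp add: field_simps power2_eq_square power3_eq_cube)
    thus ?thesis using Qd0 CS by simp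
  qed
  have fd: "DERIV (\<lambda>s. f (\<theta> s)) t :> F1 * W"
    using DERIV_chain2[OF fdiff[OF ThI, unfolded Th_def] \<theta>_deriv[rule_format, OF tT]] unfolding F1_def W_def Th_def .
  have f1d: "DERIV (\<lambda>s. deriv f (\<theta> s)) t :> F2 * W"
    using DERIV_chain2[OF f1diff[OF ThI, unfolded Th_def] \<theta>_deriv[rule_format, OF tT]] unfolding F2_def W_def Th_def .
  have rd': "DERIV r t :> p" using r_deriv tT p_def by simp
  have thd': "DERIV \<theta> t :> W" using \<theta>_deriv tT W_def by simp
  have Pt: "P t = p" and Qt: "Q t = R^2 * W" using PQ[OF tT] p_def R_def W_def by auto
  have ode: "S * ((3 * F1 + c1) * F2 - 2 * F0 * F1) + C * (F0 * F2 + 4 * F1^2 + 2 * c1 * F1) = 0"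
    using f_ode ThI unfolding S_def C_def F0_def F1_def F2_def by blast
  have rt0: "r t \<noteq> 0" using R0 R_def by simp
  have Jd: "DERIV (\<lambda>s. J_polar f c1 (r s) (\<theta> s) (P s) (Q s)) t :> 0"
    unfolding J_polar_def
    apply (rule derivative_eq_intros fd f1d Pd Qd rd' thd' refl rt0)+
    apply (unfold Pt Qt C_def[symmetric] S_def[symmetric] Th_def[symmetric] R_def[symmetric] F0_def[symmetric] F1_def[symmetric])
    apply (rule trans[of _ "(S * ((3 * F1 + c1) * F2 - 2 * F0 * F1) + C * (F0 * F2 + 4 * F1^2 + 2 * c1 * F1)) / R^3"])
     apply (use R0 in \<open>simp add: field_simps power2_eq_square power3_eq_cube\<close>)
    apply (simp add: ode)
    done
  have evJ: "eventually (\<lambda>s. J_polar f c1 (r s) (\<theta> s) (P s) (Q s)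
      = J_polar f c1 (r s) (\<theta> s) (rd s) ((r s)^2 * \<theta>d s)) (nhds t)"
    using eventually_mono[OF evT[OF tT]] PQ by auto
  show "((\<lambda>s. J_polar f c1 (r s) (\<theta> s) (rd s) ((r s)^2 * \<theta>d s)) has_real_derivative 0) (at t)"
    using DERIV_cong_ev[OF refl evJ refl] Jd by blast
qed

end
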